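(* Let $G$ be a timed region graph, let $\mu\in\Delta_{\mathrm{Min}}$ be regionally constant, let $T$ be a regionally simple regional function and $D$ a regionally constant regional function. Then $\mathrm{Improve}_{\mathrm{Min}}(\mu,(T,D))$ is regionally constant.
   Context: Fix $k\in\mathbb N$. Let $C$ be a finite set of clocks. A clock valuation is a function $\nu:C\to[0,k]$; $V$ is the set of clock valuations. For $t\ge 0$ let $(\nu+t)(c)=\nu(c)+t$; for $C'\subseteq C$ let $\mathrm{Reset}(\nu,C')(c)=0$ if $c\in C'$ and $=\nu(c)$ otherwise. Simple clock constraints are $c\bowtie i$ or $c-c'\bowtie i$ with $c,c'\in C$, $i\in\{0,\dots,k\}$, ${\bowtie}\in\{<,>,=,\le,\ge\}$. A clock region is an equivalence class of $V$ under "satisfies the same simple clock constraints"; a clock zone is a convex union of clock regions. For a finite set $L$ of locations, a configuration is $s=(\ell,\nu)\in Q=L\times V$; write $s(c)=\nu(c)$ and $s+t=(\ell,\nu+t)$ (defined if $\nu+t\in V$). A region is $(\ell,P)$ (identified with $\{(\ell,\nu):\nu\in P\}$) for a clock region $P$; $[s]$ is the region containing $s$, $\mathcal R$ the set of regions, $\overline R$ the topological closure of $R$. A zone is a set $\{(\ell,\nu):\nu\in W_\ell\}$ with each $W_\ell$ a clock zone. A timed automaton $\mathcal T=(L,C,S,A,E,\delta,\rho,F)$ consists of finite $L$, finite $C$, a zone $S\subseteq Q$ of states, a finite set $A$ of actions, $E:A\to 2^S$ with every $E(a)$ a zone, $\delta:L\times A\to L$, $\rho:A\to 2^C$, and a zone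 $F\subseteq S$ of final states. For $s=(\ell,\nu)$: $s\to_t s'$ if $s'=s+t$ is defined and $s+t'\in S$ for all $t'\in[0,t]$; $s\xrightarrow{a}s'$ if $s'=(\delta(\ell,a),\mathrm{Reset}(\nu,\rho(a)))$, $s,s'\in S$ and $s\in E(a)$. For $(a,t)\in A\times\mathbb R_{\ge0}$, $\mathrm{Succ}(s,(a,t))=(\delta(\ell,a),\mathrm{Reset}(\nu+t,\rho(a)))$. A reachability-time game is $\Gamma=(\mathcal T,L_{\mathrm{Min}},L_{\mathrm{Max}})$ with $(L_{\mathrm{Min}},L_{\mathrm{Max}})$ a partition of $L$; $S_{\mathrm{Min}}$, $S_{\mathrm{Max}}$, $\mathcal R_{\mathrm{Min}}$, $\mathcal R_{\mathrm{Max}}$ are the states/regions with location in $L_{\mathrm{Min}}$ resp. $L_{\mathrm{Max}}$. Region relations: $R\to_*R'$ if there are $s\in R,s'\in R'$, $t\ge 0$ with $s\to_t s'$; $R\to_{+1}R'$ ($R'$ is the time successor of $R$) if $R\to_*R'$, $R\ne R'$, and $R\to_*R''\to_*R'$ implies $R''\in\{R,R'\}$; $R\xrightarrow aR'$ if there are $s\in R,s'\in R'$ with $s\xrightarrow a s'$. $R$ is thin if for all $s\in R$ and $\varepsilon>0$, $[s+\varepsilon]\neq[s]$. For thin $R''$, $b\in\{0,\dots,k\}$, $c\in C$: $R\to_{b,c}R''$ if $R\to_*R''$ and $s+(b-s(c))\in R''$ for all $s\in R$. Simple timed actions: $\mathcal A=A\times\{0,\dots,k\}\times C$; for $\alpha=(a,b,c)$,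 $t(s,\alpha)=b-s(c)$ if $s(c)\le b$ and $0$ otherwise, and $\mathrm{Succ}(s,\alpha)=\mathrm{Succ}(s,(a,t(s,\alpha)))$. For $F$ defined on $\overline{R'}$: $F^\oplus_\alpha(s)=t(s,\alpha)+F(\mathrm{Succ}(s,\alpha))$ and $F^\boxplus_\alpha(s)=1+F(\mathrm{Succ}(s,\alpha))$. Timed region graph $\widehat\Gamma=(\mathcal R,\mathcal M)$: $(R,\alpha,R')\in\mathcal M$ with $\alpha=(a,b,c)$ iff (i) $R\to_{b,c}R''\xrightarrow aR'$ for some $R''$; or (ii) $R\in\mathcal R_{\mathrm{Min}}$ and $R\to_{b,c}R''\to_{+1}R'''\xrightarrow aR'$ for some $R'',R'''$; or (iii) $R\in\mathcal R_{\mathrm{Max}}$ and $R\to_{b,c}R''$, $R'''\to_{+1}R''$, $R'''\xrightarrow aR'$ for some $R'',R'''$. (For $(R,\alpha,R')\in\mathcal M$ and $s\in R$, $\mathrm{Succ}(s,\alpha)\in\overline{R'}$.) Regional functions: maps $T$ assigning to each region $R$ a function $T(R):\overline R\to\mathbb R\cup\{\infty\}$ (resp. $D(R):\overline R\to\mathbb N\cup\{\infty\}$); $\widetilde T(s)=T([s])(s)$. $T$ is regionally simple (regionally constant) if each $T(R)$ is simple (constant), where $F:X\to\mathbb R$ is simple if $F\equiv e$ for some $e\in\mathbb Z$ or $F(s)=e-s(c)$ for some $e\in\mathbb Z$, $c\in C$. Lexicographic order: $(x,y)\le^{\mathrm{lex}}(x',y')$ iff $x<x'$, or $x=x'$ and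 $y\le y'$. Strategies in graphs: for a graph $G=(\mathcal R,\mathcal M')$, $\mathcal M'\subseteq\mathcal M$, a positional strategy for Min is a map $\mu:S_{\mathrm{Min}}\to\mathcal M'$ with $\mu(s)$ of the form $([s],\alpha,R)$; $\Delta_{\mathrm{Min}}$ is the set of these. A strategy is regionally constant if $[s]=[s']$ implies equal values. For $s\in S$ let $M_*(s,(T,D))$ be the set of moves $m=([s],\alpha,R')$ of $G$ at which $(T(R')^\oplus_\alpha(s),D(R')^\boxplus_\alpha(s))$ is lexicographically minimal. Fix a function $\mathrm{Choose}$ selecting an element of each nonempty set of moves. $\mathrm{Improve}_{\mathrm{Min}}(\mu,(T,D))(s)=\mu(s)$ if $\mu(s)\in M_*(s,(T,D))$, and $=\mathrm{Choose}(M_*(s,(T,D)))$ otherwise. *)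

theory Defs
  imports "HOL-Analysis.Analysis" "HOL-Library.Extended_Real" "HOL-Library.Extended_Nat"
begin

type_synonym ('l,'c) config = "'l \<times> ('c \<Rightarrow> real)"
type_synonym ('l,'c) region = "('l,'c) config set"
type_synonym ('l,'c,'a) move = "('l,'c) region \<times> ('a \<times> nat \<times> 'c) \<times> ('l,'c) region"

definition valuations :: "nat \<Rightarrow> ('c \<Rightarrow> real) set" where
  "valuations k = {\<nu>. \<forall>c. 0 \<le> \<nu> c \<and> \<nu> c \<le> real k}"

datatype cmp = CLt | CGt | CEq | CLe | CGe

fun cmp_sem :: "cmp \<Rightarrow> real \<Rightarrow> real \<Rightarrow> bool" where
  "cmp_sem CLt x y = (x < y)"
| "cmp_sem CGt x y = (x > y)"
| "cmp_sem CEq x y = (x = y)"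
| "cmp_sem CLe x y = (x \<le> y)"
| "cmp_sem CGe x y = (x \<ge> y)"

datatype 'c clock_constraint = Single 'c cmp nat | Diff 'c 'c cmp nat

fun cc_sat :: "('c \<Rightarrow> real) \<Rightarrow> 'c clock_constraint \<Rightarrow> bool" where
  "cc_sat \<nu> (Single c r i) = cmp_sem r (\<nu> c) (real i)"
| "cc_sat \<nu> (Diff c c' r i) = cmp_sem r (\<nu> c - \<nu> c') (real i)"

fun cc_bound :: "'c clock_constraint \<Rightarrow> nat" where
  "cc_bound (Single c r i) = i"
| "cc_bound (Diff c c' r i) = i"

definition simple_cc :: "nat \<Rightarrow> 'c clock_constraint \<Rightarrow> bool" where
  "simple_cc k g \<longleftrightarrow> cc_bound g \<le> k"

definition clock_equiv :: "nat \<Rightarrow> ('c \<Rightarrow> real) \<Rightarrow> ('c \<Rightarrow> real) \<Rightarrow> bool" where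
  "clock_equiv k \<nu> \<nu>' \<longleftrightarrow> \<nu> \<in> valuations k \<and> \<nu>' \<in> valuations k \<and>
     (\<forall>g. simple_cc k g \<longrightarrow> (cc_sat \<nu> g \<longleftrightarrow> cc_sat \<nu>' g))"

definition clock_regions :: "nat \<Rightarrow> ('c \<Rightarrow> real) set set" where
  "clock_regions k = valuations k // {(\<nu>, \<nu>'). clock_equiv k \<nu> \<nu>'}"

definition convex_valset :: "('c \<Rightarrow> real) set \<Rightarrow> bool" where
  "convex_valset W \<longleftrightarrow> (\<forall>x\<in>W. \<forall>y\<in>W. \<forall>u::real. 0 \<le> u \<and> u \<le> 1 \<longrightarrow>
      (\<lambda>c. (1 - u) * x c + u * y c) \<in> W)"

definition clock_zone :: "nat \<Rightarrow> ('c \<Rightarrow> real) set \<Rightarrow> bool" where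
  "clock_zone k W \<longleftrightarrow> (\<exists>X \<subseteq> clock_regions k. W = \<Union>X) \<and> convex_valset W"

definition zone :: "nat \<Rightarrow> ('l,'c) config set \<Rightarrow> bool" where
  "zone k Z \<longleftrightarrow> (\<exists>W. (\<forall>l. clock_zone k (W l)) \<and> Z = {(l, \<nu>). \<nu> \<in> W l})"

definition regions :: "nat \<Rightarrow> ('l,'c) region set" where
  "regions k = {Pair l ` P | l P. P \<in> clock_regions k}"

(* [s]; empty if s is not a configuration (e.g. s + t undefined) *)
definition region_of :: "nat \<Rightarrow> ('l,'c) config \<Rightarrow> ('l,'c) region" where
  "region_of k s = {(l', \<nu>'). l' = fst s \<and> clock_equiv k (snd s) \<nu>'}"

(* topological closure of a region (locations carry the discrete topology) *)
definition rclosure :: "('l,'c) region \<Rightarrow> ('l,'c) config set" where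
  "rclosure R = {(l, \<nu>). \<nu> \<in> closure {\<nu>'. (l, \<nu>') \<in> R}}"

definition shift :: "('l,'c) config \<Rightarrow> real \<Rightarrow> ('l,'c) config" where
  "shift s t = (fst s, \<lambda>c. snd s c + t)"

definition reset :: "('c \<Rightarrow> real) \<Rightarrow> 'c set \<Rightarrow> ('c \<Rightarrow> real)" where
  "reset \<nu> C' = (\<lambda>c. if c \<in> C' then 0 else \<nu> c)"

record ('l,'c,'a) timed_automaton =
  States :: "('l,'c) config set"
  Enabled :: "'a \<Rightarrow> ('l,'c) config set"
  delta :: "'l \<Rightarrow> 'a \<Rightarrow> 'l"
  rho :: "'a \<Rightarrow> 'c set"
  Final :: "('l,'c) config set"

definition valid_ta :: "nat \<Rightarrow> ('l,'c,'a) timed_automaton \<Rightarrow> bool" where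
  "valid_ta k TA \<longleftrightarrow> zone k (States TA) \<and>
     (\<forall>a. Enabled TA a \<subseteq> States TA \<and> zone k (Enabled TA a)) \<and>
     Final TA \<subseteq> States TA \<and> zone k (Final TA)"

definition delay_step :: "nat \<Rightarrow> ('l,'c,'a) timed_automaton \<Rightarrow> ('l,'c) config \<Rightarrow> real \<Rightarrow> ('l,'c) config \<Rightarrow> bool" where
  "delay_step k TA s t s' \<longleftrightarrow> 0 \<le> t \<and> snd (shift s t) \<in> valuations k \<and> s' = shift s t \<and>
     (\<forall>t'\<in>{0..t}. shift s t' \<in> States TA)"

definition action_step :: "('l,'c,'a) timed_automaton \<Rightarrow> ('l,'c) config \<Rightarrow> 'a \<Rightarrow> ('l,'c) config \<Rightarrow> bool" where
  "action_step TA s a s' \<longleftrightarrow> s' = (delta TA (fst s) a, reset (snd s) (rho TA a)) \<and>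
     s \<in> States TA \<and> s' \<in> States TA \<and> s \<in> Enabled TA a"

definition succ :: "('l,'c,'a) timed_automaton \<Rightarrow> ('l,'c) config \<Rightarrow> 'a \<Rightarrow> real \<Rightarrow> ('l,'c) config" where
  "succ TA s a t = (delta TA (fst s) a, reset (snd (shift s t)) (rho TA a))"

definition reach_star :: "nat \<Rightarrow> ('l,'c,'a) timed_automaton \<Rightarrow> ('l,'c) region \<Rightarrow> ('l,'c) region \<Rightarrow> bool" where
  "reach_star k TA R R' \<longleftrightarrow> (\<exists>s\<in>R. \<exists>s'\<in>R'. \<exists>t\<ge>0. delay_step k TA s t s')"

definition time_succ :: "nat \<Rightarrow> ('l,'c,'a) timed_automaton \<Rightarrow> ('l,'c) region \<Rightarrow> ('l,'c) region \<Rightarrow> bool" where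
  "time_succ k TA R R' \<longleftrightarrow> reach_star k TA R R' \<and> R \<noteq> R' \<and>
     (\<forall>R''\<in>regions k. reach_star k TA R R'' \<and> reach_star k TA R'' R' \<longrightarrow> R'' \<in> {R, R'})"

definition thin :: "nat \<Rightarrow> ('l,'c) region \<Rightarrow> bool" where
  "thin k R \<longleftrightarrow> (\<forall>s\<in>R. \<forall>\<epsilon>>0. region_of k (shift s \<epsilon>) \<noteq> region_of k s)"

definition reach_bc :: "nat \<Rightarrow> ('l,'c,'a) timed_automaton \<Rightarrow> ('l,'c) region \<Rightarrow> nat \<Rightarrow> 'c \<Rightarrow> ('l,'c) region \<Rightarrow> bool" where
  "reach_bc k TA R b c R'' \<longleftrightarrow> thin k R'' \<and> b \<le> k \<and> reach_star k TA R R'' \<and>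
     (\<forall>s\<in>R. shift s (real b - snd s c) \<in> R'')"

definition region_action :: "('l,'c,'a) timed_automaton \<Rightarrow> ('l,'c) region \<Rightarrow> 'a \<Rightarrow> ('l,'c) region \<Rightarrow> bool" where
  "region_action TA R a R' \<longleftrightarrow> (\<exists>s\<in>R. \<exists>s'\<in>R'. action_step TA s a s')"

definition min_region :: "'l set \<Rightarrow> ('l,'c) region \<Rightarrow> bool" where
  "min_region Lmin R \<longleftrightarrow> R \<subseteq> {s. fst s \<in> Lmin}"

definition max_region :: "'l set \<Rightarrow> ('l,'c) region \<Rightarrow> bool" where
  "max_region Lmin R \<longleftrightarrow> R \<subseteq> {s. fst s \<notin> Lmin}"

(* the move set \<M> of the timed region graph; L_Max = - Lmin *)
definition moves :: "nat \<Rightarrow> ('l,'c,'a) timed_automaton \<Rightarrow> 'l set \<Rightarrow> ('l,'c,'a) move set" where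
  "moves k TA Lmin = {(R, (a, b, c), R') | R a b c R'. R \<in> regions k \<and> R' \<in> regions k \<and>
     ((\<exists>R''\<in>regions k. reach_bc k TA R b c R'' \<and> region_action TA R'' a R')
    \<or> (min_region Lmin R \<and> (\<exists>R''\<in>regions k. \<exists>R'''\<in>regions k.
          reach_bc k TA R b c R'' \<and> time_succ k TA R'' R''' \<and> region_action TA R''' a R'))
    \<or> (max_region Lmin R \<and> (\<exists>R''\<in>regions k. \<exists>R'''\<in>regions k.
          reach_bc k TA R b c R'' \<and> time_succ k TA R''' R'' \<and> region_action TA R''' a R')))}"

definition tdelay :: "('l,'c) config \<Rightarrow> ('a \<times> nat \<times> 'c) \<Rightarrow> real" where
  "tdelay s \<alpha> = (case \<alpha> of (a, b, c) \<Rightarrow> if snd s c \<le> real b then real b - snd s c else 0)"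

definition succ_alpha :: "('l,'c,'a) timed_automaton \<Rightarrow> ('l,'c) config \<Rightarrow> ('a \<times> nat \<times> 'c) \<Rightarrow> ('l,'c) config" where
  "succ_alpha TA s \<alpha> = succ TA s (fst \<alpha>) (tdelay s \<alpha>)"

definition oplus :: "('l,'c,'a) timed_automaton \<Rightarrow> (('l,'c) config \<Rightarrow> ereal) \<Rightarrow> ('a \<times> nat \<times> 'c) \<Rightarrow> ('l,'c) config \<Rightarrow> ereal" where
  "oplus TA F \<alpha> s = ereal (tdelay s \<alpha>) + F (succ_alpha TA s \<alpha>)"

definition boxplus :: "('l,'c,'a) timed_automaton \<Rightarrow> (('l,'c) config \<Rightarrow> enat) \<Rightarrow> ('a \<times> nat \<times> 'c) \<Rightarrow> ('l,'c) config \<Rightarrow> enat" where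
  "boxplus TA F \<alpha> s = 1 + F (succ_alpha TA s \<alpha>)"

definition lex_le :: "ereal \<times> enat \<Rightarrow> ereal \<times> enat \<Rightarrow> bool" where
  "lex_le p q \<longleftrightarrow> fst p < fst q \<or> (fst p = fst q \<and> snd p \<le> snd q)"

definition move_value :: "('l,'c,'a) timed_automaton \<Rightarrow> (('l,'c) region \<Rightarrow> ('l,'c) config \<Rightarrow> ereal)
    \<Rightarrow> (('l,'c) region \<Rightarrow> ('l,'c) config \<Rightarrow> enat) \<Rightarrow> ('l,'c) config \<Rightarrow> ('l,'c,'a) move \<Rightarrow> ereal \<times> enat" where
  "move_value TA T D s m = (case m of (R, \<alpha>, R') \<Rightarrow> (oplus TA (T R') \<alpha> s, boxplus TA (D R') \<alpha> s))"

definition M_star :: "nat \<Rightarrow> ('l,'c,'a) timed_automaton \<Rightarrow> ('l,'c,'a) move set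
    \<Rightarrow> (('l,'c) region \<Rightarrow> ('l,'c) config \<Rightarrow> ereal) \<Rightarrow> (('l,'c) region \<Rightarrow> ('l,'c) config \<Rightarrow> enat)
    \<Rightarrow> ('l,'c) config \<Rightarrow> ('l,'c,'a) move set" where
  "M_star k TA M' T D s = {m \<in> M'. fst m = region_of k s \<and>
     (\<forall>m'\<in>M'. fst m' = region_of k s \<longrightarrow> lex_le (move_value TA T D s m) (move_value TA T D s m'))}"

definition improve_min :: "nat \<Rightarrow> ('l,'c,'a) timed_automaton \<Rightarrow> ('l,'c,'a) move set
    \<Rightarrow> (('l,'c,'a) move set \<Rightarrow> ('l,'c,'a) move) \<Rightarrow> (('l,'c) config \<Rightarrow> ('l,'c,'a) move)
    \<Rightarrow> (('l,'c) region \<Rightarrow> ('l,'c) config \<Rightarrow> ereal) \<Rightarrow> (('l,'c) region \<Rightarrow> ('l,'c) config \<Rightarrow> enat)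
    \<Rightarrow> ('l,'c) config \<Rightarrow> ('l,'c,'a) move" where
  "improve_min k TA M' Choose \<mu> T D s =
     (if \<mu> s \<in> M_star k TA M' T D s then \<mu> s else Choose (M_star k TA M' T D s))"

definition S_Min :: "('l,'c,'a) timed_automaton \<Rightarrow> 'l set \<Rightarrow> ('l,'c) config set" where
  "S_Min TA Lmin = {s \<in> States TA. fst s \<in> Lmin}"

definition min_strategy :: "nat \<Rightarrow> ('l,'c,'a) timed_automaton \<Rightarrow> 'l set \<Rightarrow> ('l,'c,'a) move set
    \<Rightarrow> (('l,'c) config \<Rightarrow> ('l,'c,'a) move) \<Rightarrow> bool" where
  "min_strategy k TA Lmin M' \<mu> \<longleftrightarrow> (\<forall>s\<in>S_Min TA Lmin. \<mu> s \<in> M' \<and> fst (\<mu> s) = region_of k s)"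

definition regionally_constant_strategy :: "nat \<Rightarrow> ('l,'c,'a) timed_automaton \<Rightarrow> 'l set
    \<Rightarrow> (('l,'c) config \<Rightarrow> ('l,'c,'a) move) \<Rightarrow> bool" where
  "regionally_constant_strategy k TA Lmin \<mu> \<longleftrightarrow>
     (\<forall>s\<in>S_Min TA Lmin. \<forall>s'\<in>S_Min TA Lmin. region_of k s = region_of k s' \<longrightarrow> \<mu> s = \<mu> s')"

definition regionally_simple :: "nat \<Rightarrow> (('l,'c) region \<Rightarrow> ('l,'c) config \<Rightarrow> ereal) \<Rightarrow> bool" where
  "regionally_simple k T \<longleftrightarrow> (\<forall>R\<in>regions k.
     (\<exists>e::int. \<forall>s\<in>rclosure R. T R s = ereal (real_of_int e))
   \<or> (\<exists>(e::int) c. \<forall>s\<in>rclosure R. T R s = ereal (real_of_int e - snd s c)))"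

definition regionally_constant_fun :: "nat \<Rightarrow> (('l,'c) region \<Rightarrow> ('l,'c) config \<Rightarrow> 'b) \<Rightarrow> bool" where
  "regionally_constant_fun k D \<longleftrightarrow> (\<forall>R\<in>regions k. \<exists>d. \<forall>s\<in>rclosure R. D R s = d)"

end

theory Submission
  imports Defs
begin

definition same_cmp :: "real \<Rightarrow> real \<Rightarrow> bool" where
  "same_cmp a b \<longleftrightarrow> (\<forall>j::int. (a < j \<longleftrightarrow> b < j) \<and> (a = j \<longleftrightarrow> b = j))"

lemma same_cmp_refl[simp]: "same_cmp a a" by (simp add: same_cmp_def)

lemma same_cmp_neg: "same_cmp a b \<Longrightarrow> same_cmp (-a) (-b)"
  unfolding same_cmp_def
proof (intro allI conjI)
  fix j :: int assume h: "\<forall>j::int. (a < j \<longleftrightarrow> b < j) \<and> (a = j \<longleftrightarrow> b = j)"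
  from h[rule_format, of "-j"] show "(-a < j) = (-b < j)" by auto
  from h[rule_format, of "-j"] show "(-a = j) = (-b = j)" by auto
qed

lemma same_cmp_cmp: "same_cmp a b \<Longrightarrow> cmp_sem r a (real i) \<longleftrightarrow> cmp_sem r b (real i)"
  unfolding same_cmp_def
  apply (drule spec[of _ "int i"])
  by (cases r) auto

definition vequiv :: "nat \<Rightarrow> ('c \<Rightarrow> real) \<Rightarrow> ('c \<Rightarrow> real) \<Rightarrow> bool" where
  "vequiv k x y \<longleftrightarrow> x \<in> valuations k \<and> y \<in> valuations k \<and> (\<forall>c. same_cmp (x c) (y c)) \<and>
     (\<forall>c c'. same_cmp (x c - x c') (y c - y c'))"

lemma clock_equiv_imp: assumes "clock_equiv k x y" shows "vequiv k x y"
proof -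
  from assms have vx: "x \<in> valuations k" and vy: "y \<in> valuations k"
    and g: "\<And>g. simple_cc k g \<Longrightarrow> cc_sat x g = cc_sat y g"
    unfolding clock_equiv_def by auto
  have bx: "\<And>c. 0 \<le> x c \<and> x c \<le> k" using vx by (auto simp: valuations_def)
  have by': "\<And>c. 0 \<le> y c \<and> y c \<le> k" using vy by (auto simp: valuations_def)
  have S: "same_cmp (x c) (y c)" for c
    unfolding same_cmp_def
  proof
    fix j :: int
    show "(x c < j \<longleftrightarrow> y c < j) \<and> (x c = j \<longleftrightarrow> y c = j)"
    proof (cases "j < 0")
      case True thus ?thesis using bx[of c] by' [of c] by auto
    next
      case False
      show ?thesis
      proof (cases "j \<le> int k")
        case True
        define i where "i = nat j"
        have i: "j = int i" "i \<le> k" using False True unfolding i_def by auto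
        have "simple_cc k (Single c CLt i)" "simple_cc k (Single c CEq i)" using i by (auto simp: simple_cc_def)
        from g[OF this(1)] g[OF this(2)] show ?thesis using i by auto
      next
        case F2: False
        then have "real k < j" by linarith
        thus ?thesis using bx[of c] by' [of c] by auto
      qed
    qed
  qed
  have Dd: "same_cmp (x c - x c') (y c - y c')" for c c'
    unfolding same_cmp_def
  proof
    fix j :: int
    show "(x c - x c' < j \<longleftrightarrow> y c - y c' < j) \<and> (x c - x c' = j \<longleftrightarrow> y c - y c' = j)"
    proof (cases "j < - int k")
      case True then have "j < - real k" by linarith
      thus ?thesis using bx[of c] by' [of c] bx[of c'] by' [of c'] by auto
    next
      case False
      show ?thesis
      proof (cases "j \<le> int k")
        case T2: True
        show ?thesis
        proof (cases "j \<ge> 0")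
          case True
          define i where "i = nat j"
          have i: "j = int i" "i \<le> k" using T2 True unfolding i_def by auto
          have "simple_cc k (Diff c c' CLt i)" "simple_cc k (Diff c c' CEq i)" using i by (auto simp: simple_cc_def)
          from g[OF this(1)] g[OF this(2)] show ?thesis using i by auto
        next
          case F3: False
          define i where "i = nat (-j)"
          have i: "j = - int i" "i \<le> k" using False F3 unfolding i_def by auto
          have "simple_cc k (Diff c' c CGt i)" "simple_cc k (Diff c' c CEq i)" using i by (auto simp: simple_cc_def)
          from g[OF this(1)] g[OF this(2)] show ?thesis using i by auto
        qed
      next
        case F2: False
        then have "real k < j" by linarith
        thus ?thesis using bx[of c] by' [of c] bx[of c'] by' [of c'] by auto
      qed
    qed
  qed
  show ?thesis unfolding vequiv_def using vx vy S Dd by auto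
qed

lemma vequiv_imp: assumes "vequiv k x y" shows "clock_equiv k x y"
  unfolding clock_equiv_def
proof (intro conjI allI impI)
  show "x \<in> valuations k" "y \<in> valuations k" using assms by (auto simp: vequiv_def)
  fix g :: "'a clock_constraint"
  show "cc_sat x g = cc_sat y g"
    using assms by (cases g) (auto simp: vequiv_def intro!: same_cmp_cmp)
qed

lemma clock_equiv_iff: "clock_equiv k x y \<longleftrightarrow> vequiv k x y"
  using clock_equiv_imp vequiv_imp by blast



lemma same_cmp_floor: assumes "same_cmp a b" shows "floor b = floor a"
proof -
  define f where "f = floor a"
  have "of_int f \<le> a" "a < of_int f + 1" unfolding f_def by linarith+
  then have "\<not> b < of_int f" "b < of_int (f + 1)" using assms unfolding same_cmp_def
    by (metis not_less, metis of_int_add of_int_1)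
  then show ?thesis unfolding f_def[symmetric] by (intro floor_unique) auto
qed

lemma same_cmp_shift1:
  assumes "same_cmp a b"
  shows "\<exists>\<delta>>0. \<forall>u. u \<noteq> 0 \<and> \<bar>u\<bar> < \<delta> \<longrightarrow> same_cmp (a+u) (b+u)"
proof (cases "a = of_int (floor a)")
  case True
  then have "b = a" using assms unfolding same_cmp_def by metis
  then show ?thesis by (intro exI[of _ 1]) auto
next
  case False
  define f where "f = floor a"
  have fb: "floor b = f" using same_cmp_floor[OF assms] f_def by simp
  have nb: "b \<noteq> of_int f" using False assms unfolding same_cmp_def f_def by metis
  have a0: "of_int f \<le> a" "a < of_int f + 1" "of_int f \<le> b" "b < of_int f + 1"
    using f_def fb by linarith+
  have a1: "of_int f < a" "of_int f < b" using a0(1,3) False nb unfolding f_def[symmetric] by auto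
  define \<delta> where "\<delta> = min (min (a - f) (f + 1 - a)) (min (b - f) (f + 1 - b))"
  have dpos: "\<delta> > 0" using a1 a0 unfolding \<delta>_def by auto
  show ?thesis
  proof (intro exI[of _ \<delta>] conjI allI impI dpos)
    fix u :: real assume u: "u \<noteq> 0 \<and> \<bar>u\<bar> < \<delta>"
    have a2: "f < a + u" "a + u < f + 1" "f < b + u" "b + u < f + 1"
      using u unfolding \<delta>_def by (auto simp: abs_less_iff)
    show "same_cmp (a+u) (b+u)" unfolding same_cmp_def
    proof
      fix j :: int
      have "j \<le> f \<or> f + 1 \<le> j" by linarith
      then have "real_of_int j \<le> of_int f \<or> of_int f + 1 \<le> real_of_int j"
        by (metis of_int_1 of_int_add of_int_le_iff)
      then show "(a + u < j \<longleftrightarrow> b + u < j) \<and> (a + u = j \<longleftrightarrow> b + u = j)"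
        using a2 by auto
    qed
  qed
qed


lemma vequiv_shift:
  fixes x p :: "'c::finite \<Rightarrow> real"
  assumes "vequiv k x p"
  shows "\<exists>\<delta>>0. \<forall>u. u \<noteq> 0 \<and> \<bar>u\<bar> < \<delta> \<and> (\<lambda>c. x c + u) \<in> valuations k
           \<longrightarrow> vequiv k (\<lambda>c. x c + u) (\<lambda>c. p c + u)"
proof -
  have "\<forall>c. \<exists>\<delta>>0. \<forall>u. u \<noteq> 0 \<and> \<bar>u\<bar> < \<delta> \<longrightarrow> same_cmp (x c + u) (p c + u)"
    using assms same_cmp_shift1 unfolding vequiv_def by blast
  then obtain df where df: "\<And>c. df c > 0" "\<And>c u. u \<noteq> 0 \<Longrightarrow> \<bar>u\<bar> < df c \<Longrightarrow> same_cmp (x c + u) (p c + u)"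
    by metis
  define \<delta> where "\<delta> = Min (range df)"
  have dpos: "\<delta> > 0" unfolding \<delta>_def using df(1) by (subst Min_gr_iff) auto
  have dle: "\<delta> \<le> df c" for c unfolding \<delta>_def by (rule Min_le) auto
  show ?thesis
  proof (intro exI[of _ \<delta>] conjI allI impI dpos)
    fix u assume u: "u \<noteq> 0 \<and> \<bar>u\<bar> < \<delta> \<and> (\<lambda>c. x c + u) \<in> valuations k"
    have sc: "same_cmp (x c + u) (p c + u)" for c using df(2)[of u c] dle[of c] u by auto
    have pv: "(\<lambda>c. p c + u) \<in> valuations k"
      unfolding valuations_def
    proof (intro CollectI allI conjI)
      fix c
      have "0 \<le> x c + u" "x c + u \<le> k" using u by (auto simp: valuations_def)
      moreover have "(x c + u < of_int 0 \<longleftrightarrow> p c + u < of_int 0)"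
        "(x c + u < of_int (int k) \<longleftrightarrow> p c + u < of_int (int k))"
        "(x c + u = of_int (int k) \<longleftrightarrow> p c + u = of_int (int k))"
        using sc[of c] unfolding same_cmp_def by blast+
      ultimately show "0 \<le> p c + u" "p c + u \<le> k" by auto
    qed
    show "vequiv k (\<lambda>c. x c + u) (\<lambda>c. p c + u)"
      unfolding vequiv_def using u pv sc assms by (auto simp: vequiv_def)
  qed
qed

lemma vequiv_reset:
  assumes "vequiv k x p"
  shows "vequiv k (reset x C) (reset p C)"
proof -
  have v: "reset x C \<in> valuations k" "reset p C \<in> valuations k"
    using assms by (auto simp: vequiv_def valuations_def reset_def)
  have s1: "same_cmp (reset x C c) (reset p C c)" for c
    using assms by (auto simp: vequiv_def reset_def)
  have s2: "same_cmp (reset x C c - reset x C c') (reset p C c - reset p C c')" for c c'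
    using assms same_cmp_neg[of "x c'" "p c'"] by (auto simp: vequiv_def reset_def)
  show ?thesis using v s1 s2 by (simp add: vequiv_def)
qed

lemma vequiv_refl: "x \<in> valuations k \<Longrightarrow> vequiv k x x" by (simp add: vequiv_def)
lemma vequiv_sym: "vequiv k x y \<Longrightarrow> vequiv k y x" by (auto simp: vequiv_def same_cmp_def)
lemma vequiv_trans: "vequiv k x y \<Longrightarrow> vequiv k y z \<Longrightarrow> vequiv k x z" by (auto simp: vequiv_def same_cmp_def)


lemma region_of_mem: "s \<in> region_of k s' \<longleftrightarrow> fst s = fst s' \<and> vequiv k (snd s') (snd s)"
  by (cases s) (auto simp: region_of_def clock_equiv_iff)

lemma regions_iff: "R \<in> regions k \<longleftrightarrow> (\<exists>s. snd s \<in> valuations k \<and> R = region_of k s)"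
proof
  assume "R \<in> regions k"
  then obtain l P where R: "R = Pair l ` P" "P \<in> clock_regions k" unfolding regions_def by auto
  then obtain \<nu> where nu: "\<nu> \<in> valuations k" "P = {\<nu>'. clock_equiv k \<nu> \<nu>'}"
    unfolding clock_regions_def quotient_def by auto
  have "R = region_of k (l, \<nu>)" unfolding R nu region_of_def by auto
  then show "\<exists>s. snd s \<in> valuations k \<and> R = region_of k s" using nu by (intro exI[of _ "(l,\<nu>)"]) auto
next
  assume "\<exists>s. snd s \<in> valuations k \<and> R = region_of k s"
  then obtain l \<nu> where nu: "\<nu> \<in> valuations k" "R = region_of k (l,\<nu>)" by auto
  have "{\<nu>'. clock_equiv k \<nu> \<nu>'} \<in> clock_regions k"
    unfolding clock_regions_def quotient_def using nu(1) by auto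
  moreover have "R = Pair l ` {\<nu>'. clock_equiv k \<nu> \<nu>'}" unfolding nu region_of_def by auto
  ultimately show "R \<in> regions k" unfolding regions_def by blast
qed

lemma region_of_in_regions: "snd s \<in> valuations k \<Longrightarrow> region_of k s \<in> regions k"
  using regions_iff by blast

lemma region_self: "snd s \<in> valuations k \<Longrightarrow> s \<in> region_of k s"
  by (simp add: region_of_mem vequiv_refl)

lemma region_mem_eq:
  assumes "R \<in> regions k" "s \<in> R" shows "R = region_of k s" "snd s \<in> valuations k"
proof -
  obtain s0 where s0: "snd s0 \<in> valuations k" "R = region_of k s0" using assms(1) regions_iff by blast
  have h: "fst s = fst s0" "vequiv k (snd s0) (snd s)" using assms(2) s0 by (auto simp: region_of_mem)
  then show "snd s \<in> valuations k" by (simp add: vequiv_def)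
  show "R = region_of k s" unfolding s0(2)
  proof (intro set_eqI iffI)
    fix z assume "z \<in> region_of k s0"
    then show "z \<in> region_of k s" using h unfolding region_of_mem using vequiv_sym vequiv_trans by metis
  next
    fix z assume "z \<in> region_of k s"
    then show "z \<in> region_of k s0" using h unfolding region_of_mem using vequiv_trans by metis
  qed
qed

lemma regions_nonempty: "R \<in> regions k \<Longrightarrow> R \<noteq> {}"
  using regions_iff region_self by blast

lemma region_mem_vequiv:
  assumes "R \<in> regions k" "s \<in> R" "s' \<in> R" shows "fst s = fst s'" "vequiv k (snd s) (snd s')"
  using region_mem_eq[OF assms(1,2)] assms(3) by (auto simp: region_of_mem)

lemma shift_shift[simp]: "shift (shift s a) b = shift s (a + b)"
  by (simp add: shift_def add.assoc)
lemma shift_0[simp]: "shift s 0 = s" by (simp add: shift_def)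
lemma fst_shift[simp]: "fst (shift s t) = fst s" by (simp add: shift_def)
lemma snd_shift: "snd (shift s t) = (\<lambda>c. snd s c + t)" by (simp add: shift_def)


lemma region_action_reset:
  assumes "region_action TA R0 a R'" "R0 \<in> regions k" "R' \<in> regions k" "q \<in> R0"
  shows "(delta TA (fst q) a, reset (snd q) (rho TA a)) \<in> R'"
proof -
  obtain q0 s' where q0: "q0 \<in> R0" "s' \<in> R'" "action_step TA q0 a s'"
    using assms(1) unfolding region_action_def by auto
  have s': "s' = (delta TA (fst q0) a, reset (snd q0) (rho TA a))" using q0(3) by (simp add: action_step_def)
  have e: "fst q0 = fst q" "vequiv k (snd q0) (snd q)" using region_mem_vequiv[OF assms(2) q0(1) assms(4)] by auto
  have "(delta TA (fst q) a, reset (snd q) (rho TA a)) \<in> region_of k s'"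
    unfolding region_of_mem s' using e vequiv_reset by auto
  then show ?thesis using region_mem_eq(1)[OF assms(3) q0(2)] by simp
qed

lemma thin_no_forward:
  assumes "thin k R" "R \<in> regions k" "p \<in> R" "shift p e \<in> R" "e > 0"
  shows False
proof -
  have "region_of k (shift p e) \<noteq> region_of k p" using assms(1,3,5) unfolding thin_def by blast
  then show False using region_mem_eq(1)[OF assms(2) assms(3)] region_mem_eq(1)[OF assms(2) assms(4)] by simp
qed

lemma bc_le:
  assumes "reach_bc k TA R b c R''" "R \<in> regions k" "R'' \<in> regions k" "s \<in> R"
  shows "snd s c \<le> b"
proof (rule ccontr)
  assume "\<not> snd s c \<le> b"
  then have sc: "snd s c > b" by simp
  from assms(1) have thin: "thin k R''" and rs: "reach_star k TA R R''"
    and all: "\<forall>s\<in>R. shift s (real b - snd s c) \<in> R''" unfolding reach_bc_def by auto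
  from rs obtain s0 s0'' t where s0: "s0 \<in> R" "s0'' \<in> R''" "t \<ge> 0" "delay_step k TA s0 t s0''"
    unfolding reach_star_def by auto
  have eq: "s0'' = shift s0 t" using s0(4) by (simp add: delay_step_def)
  have "same_cmp (snd s c) (snd s0 c)" using region_mem_vequiv(2)[OF assms(2) assms(4) s0(1)]
    by (simp add: vequiv_def)
  then have "\<not> snd s0 c < of_int (int b)" "snd s0 c \<noteq> of_int (int b)" using sc unfolding same_cmp_def
    by (metis of_int_of_nat_eq not_less_iff_gr_or_eq)+
  then have s0c: "snd s0 c > b" by auto
  define p where "p = shift s0 (real b - snd s0 c)"
  have p: "p \<in> R''" using all s0(1) p_def by auto
  have "shift p (t - real b + snd s0 c) = s0''" unfolding p_def eq by simp
  then have "shift p (t - real b + snd s0 c) \<in> R''" using s0(2) by simp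
  moreover have "t - real b + snd s0 c > 0" using s0(3) s0c by linarith
  ultimately show False using thin_no_forward[OF thin assms(3) p] by blast
qed

lemma rclosure_from_shift:
  assumes "\<epsilon> > 0" "\<And>u. 0 < u \<Longrightarrow> u < \<epsilon> \<Longrightarrow> (l, reset (snd (shift p (\<sigma> * u))) C) \<in> R'"
  shows "(l, reset (snd p) C) \<in> rclosure R'"
proof -
  define g where "g = (\<lambda>u::real. reset (\<lambda>c. snd p c + \<sigma> * u) C)"
  have cont: "continuous_on UNIV g" unfolding g_def reset_def
    by (intro continuous_on_coordinatewise_then_product, case_tac "i \<in> C") (auto intro!: continuous_intros)
  have sub: "g ` {0<..<\<epsilon>} \<subseteq> closure {\<nu>'. (l, \<nu>') \<in> R'}"
    using assms(2) closure_subset unfolding g_def by (fastforce simp: snd_shift)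
  have "g ` closure {0<..<\<epsilon>} \<subseteq> closure {\<nu>'. (l, \<nu>') \<in> R'}"
    by (rule image_closure_subset[OF continuous_on_subset[OF cont] _ sub]) auto
  moreover have "0 \<in> closure {0<..<\<epsilon>}" using assms(1) by simp
  moreover have "g 0 = reset (snd p) C" unfolding g_def by simp
  ultimately show ?thesis unfolding rclosure_def by force
qed

lemma delay_step_intro:
  assumes "0 \<le> t" "snd (shift s t) \<in> valuations k" "\<forall>t'\<in>{0..t}. shift s t' \<in> States TA"
  shows "delay_step k TA s t (shift s t)"
  using assms by (simp add: delay_step_def)

lemma shift_valid:
  assumes "snd x \<in> valuations k" "snd (shift x t) \<in> valuations k" "0 \<le> u" "u \<le> t"
  shows "snd (shift x u) \<in> valuations k"
  using assms unfolding valuations_def snd_shift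
  by (auto, smt (verit, best))

lemma ts_forward:
  assumes "time_succ k TA R'' R'''" "thin k R''" "R'' \<in> regions k" "R''' \<in> regions k"
  shows "\<exists>x\<in>R''. \<exists>t>0. \<forall>u. 0 < u \<and> u \<le> t \<longrightarrow> shift x (1 * u) \<in> R'''"
proof -
  from assms(1) have ne: "R'' \<noteq> R'''" and rs: "reach_star k TA R'' R'''"
    and btw: "\<forall>R\<in>regions k. reach_star k TA R'' R \<and> reach_star k TA R R''' \<longrightarrow> R \<in> {R'', R'''}"
    unfolding time_succ_def by auto
  from rs obtain x y t where xy: "x \<in> R''" "y \<in> R'''" "t \<ge> 0" "delay_step k TA x t y"
    unfolding reach_star_def by auto
  have y: "y = shift x t" and vy: "snd (shift x t) \<in> valuations k"
    and st: "\<forall>t'\<in>{0..t}. shift x t' \<in> States TA"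
    using xy(4) by (auto simp: delay_step_def)
  have vx: "snd x \<in> valuations k" using region_mem_eq(2)[OF assms(3) xy(1)] .
  have tpos: "t > 0"
  proof (rule ccontr)
    assume "\<not> t > 0" then have "t = 0" using xy(3) by simp
    then have "y = x" using y by simp
    then show False using ne region_mem_eq(1)[OF assms(3) xy(1)] region_mem_eq(1)[OF assms(4) xy(2)] by simp
  qed
  have "shift x u \<in> R'''" if u: "0 < u" "u \<le> t" for u
  proof -
    define z where "z = shift x u"
    have vz: "snd z \<in> valuations k" unfolding z_def using shift_valid[OF vx vy] u by simp
    have Rz: "region_of k z \<in> regions k" using region_of_in_regions[OF vz] .
    have zin: "z \<in> region_of k z" using region_self[OF vz] .
    have "delay_step k TA x u z"
      unfolding z_def using u vz st by (auto intro!: delay_step_intro simp: z_def)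
    then have r1: "reach_star k TA R'' (region_of k z)"
      unfolding reach_star_def using xy(1) zin u by (metis less_imp_le)
    have "shift z (t - u) = y" unfolding z_def y by simp
    moreover have "delay_step k TA z (t - u) (shift z (t - u))"
      apply (rule delay_step_intro) using u vy st unfolding z_def by auto
    ultimately have r2: "reach_star k TA (region_of k z) R'''"
      unfolding reach_star_def using zin xy(2) u by (metis diff_ge_0_iff_ge)
    have "region_of k z \<in> {R'', R'''}" using btw Rz r1 r2 by blast
    moreover have "region_of k z \<noteq> R''"
    proof
      assume "region_of k z = R''"
      then have "shift x u \<in> R''" using zin z_def by simp
      then show False using thin_no_forward[OF assms(2,3) xy(1)] u by blast
    qed
    ultimately show ?thesis using zin z_def by auto
  qed
  then show ?thesis using xy(1) tpos by auto
qed

lemma ts_backward: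
  assumes "time_succ k TA R''' R''" "thin k R''" "R'' \<in> regions k" "R''' \<in> regions k"
  shows "\<exists>y\<in>R''. \<exists>t>0. \<forall>v. 0 < v \<and> v \<le> t \<longrightarrow> shift y (- 1 * v) \<in> R'''"
proof -
  from assms(1) have ne: "R''' \<noteq> R''" and rs: "reach_star k TA R''' R''"
    and btw: "\<forall>R\<in>regions k. reach_star k TA R''' R \<and> reach_star k TA R R'' \<longrightarrow> R \<in> {R''', R''}"
    unfolding time_succ_def by auto
  from rs obtain x y t where xy: "x \<in> R'''" "y \<in> R''" "t \<ge> 0" "delay_step k TA x t y"
    unfolding reach_star_def by auto
  have y: "y = shift x t" and vy: "snd (shift x t) \<in> valuations k"
    and st: "\<forall>t'\<in>{0..t}. shift x t' \<in> States TA"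
    using xy(4) by (auto simp: delay_step_def)
  have vx: "snd x \<in> valuations k" using region_mem_eq(2)[OF assms(4) xy(1)] .
  have tpos: "t > 0"
  proof (rule ccontr)
    assume "\<not> t > 0" then have "t = 0" using xy(3) by simp
    then have "y = x" using y by simp
    then show False using ne region_mem_eq(1)[OF assms(3) xy(2)] region_mem_eq(1)[OF assms(4) xy(1)] by simp
  qed
  have "shift y (- 1 * v) \<in> R'''" if v: "0 < v" "v \<le> t" for v
  proof -
    define z where "z = shift x (t - v)"
    have zy: "shift y (- 1 * v) = z" unfolding z_def y by simp
    have vz: "snd z \<in> valuations k" unfolding z_def using shift_valid[OF vx vy] v by simp
    have Rz: "region_of k z \<in> regions k" using region_of_in_regions[OF vz] .
    have zin: "z \<in> region_of k z" using region_self[OF vz] .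
    have "delay_step k TA x (t - v) z"
      unfolding z_def using v vz st by (auto intro!: delay_step_intro simp: z_def)
    then have r1: "reach_star k TA R''' (region_of k z)"
      unfolding reach_star_def using xy(1) zin v by (metis diff_ge_0_iff_ge)
    have "shift z v = y" unfolding z_def y by simp
    moreover have "delay_step k TA z v (shift z v)"
      apply (rule delay_step_intro) using v vy st unfolding z_def by auto
    ultimately have r2: "reach_star k TA (region_of k z) R''"
      unfolding reach_star_def using zin xy(2) v by (metis less_imp_le)
    have "region_of k z \<in> {R''', R''}" using btw Rz r1 r2 by blast
    moreover have "region_of k z \<noteq> R''"
    proof
      assume "region_of k z = R''"
      then have "z \<in> R''" using zin by simp
      moreover have "shift z v \<in> R''" using \<open>shift z v = y\<close> xy(2) by simp
      ultimately show False using thin_no_forward[OF assms(2,3)] v by blast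
    qed
    ultimately show ?thesis using zin zy by auto
  qed
  then show ?thesis using xy(2) tpos by blast
qed

lemma transfer_shift:
  fixes x p :: "'l \<times> ('c::finite \<Rightarrow> real)"
  assumes "R'' \<in> regions k" "R''' \<in> regions k" "x \<in> R''" "p \<in> R''" "t > 0" "\<bar>\<sigma>\<bar> = 1"
    "\<forall>u. 0 < u \<and> u \<le> t \<longrightarrow> shift x (\<sigma> * u) \<in> R'''"
  shows "\<exists>\<epsilon>>0. \<forall>u. 0 < u \<and> u < \<epsilon> \<longrightarrow> shift p (\<sigma> * u) \<in> R'''"
proof -
  have e: "fst x = fst p" "vequiv k (snd x) (snd p)" using region_mem_vequiv[OF assms(1,3,4)] by auto
  obtain \<delta> where d: "\<delta> > 0" "\<And>u. u \<noteq> 0 \<and> \<bar>u\<bar> < \<delta> \<and> (\<lambda>c. snd x c + u) \<in> valuations k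
           \<Longrightarrow> vequiv k (\<lambda>c. snd x c + u) (\<lambda>c. snd p c + u)"
    using vequiv_shift[OF e(2)] by blast
  show ?thesis
  proof (intro exI[of _ "min \<delta> t"] conjI allI impI)
    show "min \<delta> t > 0" using d(1) assms(5) by simp
    fix u assume u: "0 < u \<and> u < min \<delta> t"
    have xin: "shift x (\<sigma> * u) \<in> R'''" using assms(7) u by auto
    have vx: "(\<lambda>c. snd x c + \<sigma> * u) \<in> valuations k"
      using region_mem_eq(2)[OF assms(2) xin] by (simp add: snd_shift)
    have au: "\<bar>\<sigma> * u\<bar> = u" using assms(6) u by (simp add: abs_mult)
    have "vequiv k (\<lambda>c. snd x c + \<sigma> * u) (\<lambda>c. snd p c + \<sigma> * u)"
      using d(2)[of "\<sigma> * u"] vx au u assms(6) by auto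
    then have "shift p (\<sigma> * u) \<in> region_of k (shift x (\<sigma> * u))"
      unfolding region_of_mem using e(1) by (simp add: snd_shift)
    then show "shift p (\<sigma> * u) \<in> R'''" using region_mem_eq(1)[OF assms(2) xin] by simp
  qed
qed

lemma clos_lemma:
  fixes p x :: "'l \<times> ('c::finite \<Rightarrow> real)"
  assumes "R'' \<in> regions k" "R''' \<in> regions k" "R' \<in> regions k" "region_action TA R''' a R'"
    "p \<in> R''" "x \<in> R''" "t > 0" "\<bar>\<sigma>\<bar> = 1" "\<forall>u. 0 < u \<and> u \<le> t \<longrightarrow> shift x (\<sigma> * u) \<in> R'''"
  shows "(delta TA (fst p) a, reset (snd p) (rho TA a)) \<in> rclosure R'"
proof -
  obtain \<epsilon> where e: "\<epsilon> > 0" "\<forall>u. 0 < u \<and> u < \<epsilon> \<longrightarrow> shift p (\<sigma> * u) \<in> R'''"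
    using transfer_shift[OF assms(1,2,6,5,7,8,9)] by blast
  show ?thesis
  proof (rule rclosure_from_shift[OF e(1)])
    fix u :: real assume "0 < u" "u < \<epsilon>"
    then have "shift p (\<sigma> * u) \<in> R'''" using e(2) by blast
    from region_action_reset[OF assms(4,2,3) this]
    show "(delta TA (fst p) a, reset (snd (shift p (\<sigma> * u))) (rho TA a)) \<in> R'" by simp
  qed
qed

lemma move_succ:
  fixes TA :: "('l, 'c::finite, 'a) timed_automaton"
  assumes "(R, (a, b, c), R') \<in> moves k TA Lmin" "s \<in> R"
  shows "snd s c \<le> b" "succ_alpha TA s (a, b, c) \<in> rclosure R'"
proof -
  from assms(1) have RR: "R \<in> regions k" "R' \<in> regions k" and cases:
    "(\<exists>R''\<in>regions k. reach_bc k TA R b c R'' \<and> region_action TA R'' a R')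
    \<or> (\<exists>R''\<in>regions k. \<exists>R'''\<in>regions k.
          reach_bc k TA R b c R'' \<and> time_succ k TA R'' R''' \<and> region_action TA R''' a R')
    \<or> (\<exists>R''\<in>regions k. \<exists>R'''\<in>regions k.
          reach_bc k TA R b c R'' \<and> time_succ k TA R''' R'' \<and> region_action TA R''' a R')"
    unfolding moves_def by blast+
  then obtain R'' where R'': "R'' \<in> regions k" "reach_bc k TA R b c R''" by blast
  show le: "snd s c \<le> b" using bc_le[OF R''(2) RR(1) R''(1) assms(2)] .
  define p where "p = shift s (real b - snd s c)"
  have sa: "succ_alpha TA s (a, b, c) = (delta TA (fst p) a, reset (snd p) (rho TA a))"
    unfolding succ_alpha_def succ_def tdelay_def p_def using le by simp
  have sub: "R' \<subseteq> rclosure R'" unfolding rclosure_def using closure_subset by fastforce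
  have pin: "p \<in> R2" if "reach_bc k TA R b c R2" for R2
    using that assms(2) unfolding reach_bc_def p_def by blast
  from cases show "succ_alpha TA s (a, b, c) \<in> rclosure R'"
  proof (elim disjE bexE conjE)
    fix R2 assume "R2 \<in> regions k" "reach_bc k TA R b c R2" "region_action TA R2 a R'"
    then show ?thesis unfolding sa using region_action_reset[of TA R2 a R' k p] pin sub RR by auto
  next
    fix R2 R3 assume h: "R2 \<in> regions k" "R3 \<in> regions k" "reach_bc k TA R b c R2"
      "time_succ k TA R2 R3" "region_action TA R3 a R'"
    have th: "thin k R2" using h(3) by (simp add: reach_bc_def)
    obtain x t where xt: "x \<in> R2" "t > 0" "\<forall>u. 0 < u \<and> u \<le> t \<longrightarrow> shift x (1 * u) \<in> R3"
      using ts_forward[OF h(4) th h(1,2)] by blast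
    show ?thesis unfolding sa
      by (rule clos_lemma[OF h(1,2) RR(2) h(5) pin[OF h(3)] xt(1,2) _ xt(3)]) simp
  next
    fix R2 R3 assume h: "R2 \<in> regions k" "R3 \<in> regions k" "reach_bc k TA R b c R2"
      "time_succ k TA R3 R2" "region_action TA R3 a R'"
    have th: "thin k R2" using h(3) by (simp add: reach_bc_def)
    obtain x t where xt: "x \<in> R2" "t > 0" "\<forall>u. 0 < u \<and> u \<le> t \<longrightarrow> shift x (- 1 * u) \<in> R3"
      using ts_backward[OF h(4) th h(1,2)] by blast
    show ?thesis unfolding sa
      by (rule clos_lemma[OF h(1,2) RR(2) h(5) pin[OF h(3)] xt(1,2) _ xt(3)]) simp
  qed
qed

lemma move_value_form:
  fixes TA :: "('l, 'c::finite, 'a) timed_automaton"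
  assumes "(R, (a, b, c), R') \<in> moves k TA Lmin" "regionally_simple k T" "regionally_constant_fun k D"
  shows "\<exists>(E::int) C d. \<forall>s\<in>R. move_value TA T D s (R, (a, b, c), R') = (ereal (real_of_int E - snd s C), d)"
proof -
  have R': "R' \<in> regions k" using assms(1) unfolding moves_def by blast
  obtain d0 where d0: "\<forall>s\<in>rclosure R'. D R' s = d0" using assms(3) R' unfolding regionally_constant_fun_def by blast
  let ?sa = "\<lambda>s. succ_alpha TA s (a, b, c)"
  have sa_c: "snd (?sa s) c' = (if c' \<in> rho TA a then 0 else snd s c' + (real b - snd s c))" if "s \<in> R" for s c'
    using move_succ(1)[OF assms(1) that]
    by (simp add: succ_alpha_def succ_def tdelay_def reset_def snd_shift)
  have td: "tdelay s (a, b, c) = real b - snd s c" if "s \<in> R" for s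
    using move_succ(1)[OF assms(1) that] by (simp add: tdelay_def)
  have mv: "move_value TA T D s (R, (a, b, c), R') = (ereal (real b - snd s c) + T R' (?sa s), 1 + d0)"
    if "s \<in> R" for s
    using td[OF that] d0 move_succ(2)[OF assms(1) that]
    by (simp add: move_value_def oplus_def boxplus_def)
  from assms(2) R' consider (const) e :: int where "\<forall>s\<in>rclosure R'. T R' s = ereal (real_of_int e)"
    | (lin) e :: int and c' where "\<forall>s\<in>rclosure R'. T R' s = ereal (real_of_int e - snd s c')"
    unfolding regionally_simple_def by blast
  then show ?thesis
  proof cases
    case const
    show ?thesis
    proof (intro exI ballI)
      fix s assume s: "s \<in> R"
      show "move_value TA T D s (R, (a, b, c), R') = (ereal (real_of_int (int b + e) - snd s c), 1 + d0)"
        using mv[OF s] const move_succ(2)[OF assms(1) s] by simp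
    qed
  next
    case lin
    show ?thesis
    proof (cases "c' \<in> rho TA a")
      case True
      show ?thesis
      proof (intro exI ballI)
        fix s assume s: "s \<in> R"
        show "move_value TA T D s (R, (a, b, c), R') = (ereal (real_of_int (int b + e) - snd s c), 1 + d0)"
          using mv[OF s] lin move_succ(2)[OF assms(1) s] sa_c[OF s, of c'] True by simp
      qed
    next
      case False
      show ?thesis
      proof (intro exI ballI)
        fix s assume s: "s \<in> R"
        show "move_value TA T D s (R, (a, b, c), R') = (ereal (real_of_int e - snd s c'), 1 + d0)"
          using mv[OF s] lin move_succ(2)[OF assms(1) s] sa_c[OF s, of c'] False by simp
      qed
    qed
  qed
qed

lemma lex_invariant:
  fixes TA :: "('l, 'c::finite, 'a) timed_automaton"
  assumes "m \<in> moves k TA Lmin" "m' \<in> moves k TA Lmin" "fst m = R" "fst m' = R"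
    "R \<in> regions k" "s \<in> R" "s' \<in> R"
    "regionally_simple k T" "regionally_constant_fun k D"
  shows "lex_le (move_value TA T D s m) (move_value TA T D s m') \<longleftrightarrow>
         lex_le (move_value TA T D s' m) (move_value TA T D s' m')"
proof -
  obtain a b c R1 where m: "m = (R, (a, b, c), R1)" using assms(3) by (cases m) auto
  obtain a' b' c' R2 where m': "m' = (R, (a', b', c'), R2)" using assms(4) by (cases m') auto
  obtain E1 C1 d1 where f1: "\<forall>s\<in>R. move_value TA T D s m = (ereal (real_of_int E1 - snd s C1), d1)"
    using move_value_form[OF assms(1)[unfolded m] assms(8,9)] m by blast
  obtain E2 C2 d2 where f2: "\<forall>s\<in>R. move_value TA T D s m' = (ereal (real_of_int E2 - snd s C2), d2)"
    using move_value_form[OF assms(2)[unfolded m'] assms(8,9)] m' by blast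
  have "same_cmp (snd s C2 - snd s C1) (snd s' C2 - snd s' C1)"
    using region_mem_vequiv(2)[OF assms(5,6,7)] by (simp add: vequiv_def)
  then have sc: "(snd s C2 - snd s C1 < of_int (E2 - E1) \<longleftrightarrow> snd s' C2 - snd s' C1 < of_int (E2 - E1))"
    "(snd s C2 - snd s C1 = of_int (E2 - E1) \<longleftrightarrow> snd s' C2 - snd s' C1 = of_int (E2 - E1))"
    unfolding same_cmp_def by blast+
  have e1: "(real_of_int E1 - x C1 < real_of_int E2 - x C2) \<longleftrightarrow> (x C2 - x C1 < of_int (E2 - E1))" for x :: "'c \<Rightarrow> real"
    by auto
  have e2: "(real_of_int E1 - x C1 = real_of_int E2 - x C2) \<longleftrightarrow> (x C2 - x C1 = of_int (E2 - E1))" for x :: "'c \<Rightarrow> real"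
    by auto
  show ?thesis
    using f1 f2 assms(6,7) sc unfolding lex_le_def by (simp add: e1 e2)
qed

lemma states_valid:
  assumes "valid_ta k TA" "s \<in> States TA" shows "snd s \<in> valuations k"
proof -
  obtain W where W: "\<forall>l. clock_zone k (W l)" "States TA = {(l, \<nu>). \<nu> \<in> W l}"
    using assms(1) unfolding valid_ta_def zone_def by blast
  obtain X where X: "X \<subseteq> clock_regions k" "W (fst s) = \<Union>X" using W(1) unfolding clock_zone_def by blast
  have "snd s \<in> W (fst s)" using assms(2) W(2) by (cases s) auto
  then obtain P where "P \<in> X" "snd s \<in> P" using X by auto
  then show ?thesis using X(1) unfolding clock_regions_def quotient_def by (auto simp: clock_equiv_def)
qed

theorem mainTheorem15:
  fixes k :: nat
    and TA :: "('l::finite, 'c::finite, 'a::finite) timed_automaton"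
    and Lmin :: "'l set"
    and M' :: "('l,'c,'a) move set"
    and Choose :: "('l,'c,'a) move set \<Rightarrow> ('l,'c,'a) move"
    and \<mu> :: "('l,'c) config \<Rightarrow> ('l,'c,'a) move"
    and T :: "('l,'c) region \<Rightarrow> ('l,'c) config \<Rightarrow> ereal"
    and D :: "('l,'c) region \<Rightarrow> ('l,'c) config \<Rightarrow> enat"
  assumes "valid_ta k TA"
    and "M' \<subseteq> moves k TA Lmin"
    and "\<forall>X. X \<noteq> {} \<longrightarrow> Choose X \<in> X"
    and "min_strategy k TA Lmin M' \<mu>"
    and "regionally_constant_strategy k TA Lmin \<mu>"
    and "regionally_simple k T"
    and "regionally_constant_fun k D"
  shows "regionally_constant_strategy k TA Lmin (improve_min k TA M' Choose \<mu> T D)"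
  unfolding regionally_constant_strategy_def
proof (intro ballI impI)
  fix s s' assume ss: "s \<in> S_Min TA Lmin" "s' \<in> S_Min TA Lmin" and eq: "region_of k s = region_of k s'"
  have mu: "\<mu> s = \<mu> s'" using assms(5) ss eq unfolding regionally_constant_strategy_def by blast
  have vs: "snd s \<in> valuations k" using states_valid[OF assms(1)] ss(1) by (simp add: S_Min_def)
  have vs': "snd s' \<in> valuations k" using states_valid[OF assms(1)] ss(2) by (simp add: S_Min_def)
  define R where "R = region_of k s"
  have R: "R \<in> regions k" "s \<in> R" "s' \<in> R"
    using region_of_in_regions[OF vs] region_self[OF vs] region_self[OF vs'] eq unfolding R_def by auto
  have "M_star k TA M' T D s = M_star k TA M' T D s'"
    unfolding M_star_def eq[symmetric] R_def[symmetric]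
  proof (intro Collect_cong conj_cong refl ball_cong imp_cong)
    fix m m' assume "m \<in> M'" "fst m = R" "m' \<in> M'" "fst m' = R"
    then show "lex_le (move_value TA T D s m) (move_value TA T D s m') \<longleftrightarrow>
         lex_le (move_value TA T D s' m) (move_value TA T D s' m')"
      using lex_invariant[of m k TA Lmin m' R s s' T D] assms(2,6,7) R by blast
  qed
  then show "improve_min k TA M' Choose \<mu> T D s = improve_min k TA M' Choose \<mu> T D s'"
    unfolding improve_min_def mu by simp
qed

end
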